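(* If $G$ is a connected $P_5$-free graph, then $d_G(s,t)=\lambda_G(s,t)$ for every $s,t\in V(G)$.
   Context: Rendezvous game with adversaries. Let $G$ be a finite, simple, undirected, connected graph, let $s,t\in V(G)$ and let $k\ge 1$ be an integer. Two players play: Facilitator, who controls two agents $R$ and $J$ initially placed on $s$ and $t$ respectively, and Divider, who controls $k$ agents $D_1,\dots,D_k$ which Divider initially places on vertices of $V(G)\setminus\{s,t\}$ of his choice (several agents may share a vertex). After the initial placement the players alternate moves, Facilitator moving first. In a move, the player moves each of his agents to an adjacent vertex or leaves it where it is; no agent may be moved to a vertex currently occupied by an agent of the opponent. Both players have full information. Facilitator wins if at some moment $R$ and $J$ occupy the same vertex; Divider wins if this never happens. $d_G(s,t)$ is the minimum $k$ such that Divider with $k$ agents has a winning strategy on $G$ against Facilitator starting from $s$ and $t$; $d_G(s,t)=+\infty$ if $s=t$ or $s,t$ are adjacent. $\lambda_G(s,t)$ is the minimum size of a set $S\subseteq V(G)\setminus\{s,t\}$ such that $s$ and $t$ lie in different connected components of $G-S$; $\lambda_G(s,t)=+\infty$ if $s=t$ or $s,t$ are adjacent. A graph is $P_5$-free if it has no induced subgraph isomorphic to the path on 5 vertices. *)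

theory Defs
  imports Main "HOL-Library.Extended_Nat"
begin

definition simple_graph :: "'a set \<Rightarrow> ('a \<Rightarrow> 'a \<Rightarrow> bool) \<Rightarrow> bool" where
  "simple_graph V E \<longleftrightarrow> finite V \<and> (\<forall>x y. E x y \<longrightarrow> E y x)
     \<and> (\<forall>x. \<not> E x x) \<and> (\<forall>x y. E x y \<longrightarrow> x \<in> V \<and> y \<in> V)"

definition connected_in :: "('a \<Rightarrow> 'a \<Rightarrow> bool) \<Rightarrow> 'a set \<Rightarrow> 'a \<Rightarrow> 'a \<Rightarrow> bool" where
  "connected_in E W x y \<longleftrightarrow> x \<in> W \<and> y \<in> W \<and> (\<lambda>u v. E u v \<and> u \<in> W \<and> v \<in> W)\<^sup>*\<^sup>* x y"

definition connected_graph :: "'a set \<Rightarrow> ('a \<Rightarrow> 'a \<Rightarrow> bool) \<Rightarrow> bool" where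
  "connected_graph V E \<longleftrightarrow> V \<noteq> {} \<and> (\<forall>x\<in>V. \<forall>y\<in>V. connected_in E V x y)"

definition P5_free :: "'a set \<Rightarrow> ('a \<Rightarrow> 'a \<Rightarrow> bool) \<Rightarrow> bool" where
  "P5_free V E \<longleftrightarrow> \<not> (\<exists>f :: nat \<Rightarrow> 'a. inj_on f {0..<5} \<and> f ` {0..<5} \<subseteq> V \<and>
      (\<forall>i<5. \<forall>j<5. E (f i) (f j) \<longleftrightarrow> (i + 1 = j \<or> j + 1 = i)))"

definition lambda_G :: "'a set \<Rightarrow> ('a \<Rightarrow> 'a \<Rightarrow> bool) \<Rightarrow> 'a \<Rightarrow> 'a \<Rightarrow> enat" where
  "lambda_G V E s t = (if s = t \<or> E s t then \<infinity> else
     Inf ((\<lambda>S. enat (card S)) ` {S. S \<subseteq> V - {s, t} \<and> \<not> connected_in E (V - S) s t}))"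

text \<open>The rendezvous game. A position is (R, J, list of Divider agent positions).\<close>
type_synonym 'a pos = "'a \<times> 'a \<times> 'a list"

definition gstep :: "'a set \<Rightarrow> ('a \<Rightarrow> 'a \<Rightarrow> bool) \<Rightarrow> 'a \<Rightarrow> 'a \<Rightarrow> bool" where
  "gstep V E x y \<longleftrightarrow> y \<in> V \<and> (y = x \<or> E x y)"

definition fac_move :: "'a set \<Rightarrow> ('a \<Rightarrow> 'a \<Rightarrow> bool) \<Rightarrow> 'a pos \<Rightarrow> 'a pos \<Rightarrow> bool" where
  "fac_move V E p q \<longleftrightarrow> (case p of (r, j, D) \<Rightarrow> case q of (r', j', D') \<Rightarrow>
     D' = D \<and> gstep V E r r' \<and> gstep V E j j' \<and> r' \<notin> set D \<and> j' \<notin> set D)"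

definition div_move :: "'a set \<Rightarrow> ('a \<Rightarrow> 'a \<Rightarrow> bool) \<Rightarrow> 'a pos \<Rightarrow> 'a pos \<Rightarrow> bool" where
  "div_move V E p q \<longleftrightarrow> (case p of (r, j, D) \<Rightarrow> case q of (r', j', D') \<Rightarrow>
     r' = r \<and> j' = j \<and> length D' = length D \<and>
     (\<forall>i<length D. gstep V E (D ! i) (D' ! i) \<and> D' ! i \<noteq> r \<and> D' ! i \<noteq> j))"

text \<open>Divider with k agents has a winning strategy: an initial placement D0 on
  V - {s,t} and a (history-dependent) strategy sigma such that along every finite
  prefix of a play in which Facilitator moves legally (at steps 2m -> 2m+1) and Divider
  follows sigma (at steps 2m+1 -> 2m+2), Divider's moves are legal and R, J never
  occupy the same vertex.\<close>
definition divider_wins :: "'a set \<Rightarrow> ('a \<Rightarrow> 'a \<Rightarrow> bool) \<Rightarrow> 'a \<Rightarrow> 'a \<Rightarrow> nat \<Rightarrow> bool" where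
  "divider_wins V E s t k \<longleftrightarrow>
     (\<exists>D0 (\<sigma> :: 'a pos list \<Rightarrow> 'a list). length D0 = k \<and> set D0 \<subseteq> V - {s, t} \<and>
       (\<forall>(p :: nat \<Rightarrow> 'a pos) N. p 0 = (s, t, D0) \<longrightarrow>
          (\<forall>m. 2 * m + 1 \<le> N \<longrightarrow> fac_move V E (p (2 * m)) (p (2 * m + 1))) \<longrightarrow>
          (\<forall>m. 2 * m + 2 \<le> N \<longrightarrow>
               p (2 * m + 2) = (fst (p (2 * m + 1)), fst (snd (p (2 * m + 1))),
                                \<sigma> (map p [0..<2 * m + 2]))) \<longrightarrow>
          (\<forall>m. 2 * m + 2 \<le> N \<longrightarrow> div_move V E (p (2 * m + 1)) (p (2 * m + 2))) \<and>
          (\<forall>i\<le>N. fst (p i) \<noteq> fst (snd (p i)))))"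

text \<open>d_G(s,t): least k \<ge> 1 such that Divider with k agents wins; infinity if
  s = t or s, t adjacent (and Inf of the empty set is infinity).\<close>
definition d_G :: "'a set \<Rightarrow> ('a \<Rightarrow> 'a \<Rightarrow> bool) \<Rightarrow> 'a \<Rightarrow> 'a \<Rightarrow> enat" where
  "d_G V E s t = (if s = t \<or> E s t then \<infinity> else
     Inf (enat ` {k. k \<ge> 1 \<and> divider_wins V E s t k}))"

end

theory Submission
  imports Defs
begin

lemma rtranclp_sym_aux:
  assumes "\<And>x y. R x y \<Longrightarrow> R y x" and "R\<^sup>*\<^sup>* x y"
  shows "R\<^sup>*\<^sup>* y x"
  using assms(2)
proof induction
  case base then show ?case by simp
next
  case (step y z)
  then show ?case using assms(1) by (meson converse_rtranclp_into_rtranclp)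
qed

lemma connected_in_sym:
  assumes G: "simple_graph V E" and c: "connected_in E W x y"
  shows "connected_in E W y x"
proof -
  have sym: "\<And>u v. E u v \<and> u \<in> W \<and> v \<in> W \<Longrightarrow> E v u \<and> v \<in> W \<and> u \<in> W"
    using G unfolding simple_graph_def by blast
  show ?thesis using c rtranclp_sym_aux[of "\<lambda>u v. E u v \<and> u \<in> W \<and> v \<in> W", OF sym] unfolding connected_in_def by blast
qed

lemma connected_in_trans:
  "connected_in E W x y \<Longrightarrow> connected_in E W y z \<Longrightarrow> connected_in E W x z"
  unfolding connected_in_def by (meson rtranclp_trans)

lemma connected_in_step:
  assumes "connected_in E W x r" "gstep V E r r'" "r' \<in> W"
  shows "connected_in E W x r'"
  using assms unfolding connected_in_def gstep_def
  by (auto intro: rtranclp.rtrancl_into_rtrancl)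

lemma short_path:
  assumes G: "simple_graph V E" and P: "P5_free V E" and W: "W \<subseteq> V"
    and c: "connected_in E W s t" and st: "s \<noteq> t" "\<not> E s t"
  shows "(\<exists>c\<in>W. E s c \<and> E c t) \<or> (\<exists>a\<in>W. \<exists>b\<in>W. E s a \<and> E a b \<and> E b t)"
proof -
  define R where "R = (\<lambda>u v. E u v \<and> u \<in> W \<and> v \<in> W)"
  have Esym: "\<And>u v. E u v \<Longrightarrow> E v u" and Eirr: "\<And>u. \<not> E u u"
    using G unfolding simple_graph_def by blast+
  have "R\<^sup>*\<^sup>* s t" using c unfolding connected_in_def R_def by simp
  then obtain n0 where n0: "(R ^^ n0) s t" using rtranclp_power by metis
  define n where "n = (LEAST n. (R ^^ n) s t)"
  have n: "(R ^^ n) s t" unfolding n_def by (rule LeastI) (rule n0)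
  have nmin: "\<And>m. (R ^^ m) s t \<Longrightarrow> n \<le> m" unfolding n_def by (rule Least_le)
  obtain f where f0: "f 0 = s" and fn: "f n = t" and fs: "\<And>i. i < n \<Longrightarrow> R (f i) (f (Suc i))"
    using n relpowp_fun_conv by metis
  have tW: "t \<in> W" using c unfolding connected_in_def by simp
  have fW: "\<And>i. i \<le> n \<Longrightarrow> f i \<in> W"
  proof -
    fix i assume "i \<le> n"
    then show "f i \<in> W"
    proof (cases "i < n")
      case True then show ?thesis using fs[OF True] unfolding R_def by simp
    next
      case False then show ?thesis using \<open>i \<le> n\<close> fn tW by simp
    qed
  qed
  have pre: "\<And>i. i \<le> n \<Longrightarrow> (R ^^ i) s (f i)"
  proof -
    fix i show "i \<le> n \<Longrightarrow> (R ^^ i) s (f i)"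
    proof (induction i)
      case 0 then show ?case by (simp add: f0)
    next
      case (Suc i) then show ?case using fs[of i] by (auto intro: relpowp_Suc_I)
    qed
  qed
  have suf0: "\<And>k. k \<le> n \<Longrightarrow> (R ^^ k) (f (n - k)) t"
  proof -
    fix k show "k \<le> n \<Longrightarrow> (R ^^ k) (f (n - k)) t"
    proof (induction k)
      case 0 then show ?case by (simp add: fn)
    next
      case (Suc k)
      have "R (f (n - Suc k)) (f (Suc (n - Suc k)))" using fs[of "n - Suc k"] Suc.prems by simp
      moreover have "Suc (n - Suc k) = n - k" using Suc.prems by simp
      ultimately show ?case using Suc relpowp_Suc_I2[of R "f (n - Suc k)" "f (n - k)" k t] by simp
    qed
  qed
  have suf: "\<And>i. i \<le> n \<Longrightarrow> (R ^^ (n - i)) (f i) t"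
  proof -
    fix i assume "i \<le> n" then show "(R ^^ (n - i)) (f i) t" using suf0[of "n - i"] by simp
  qed
  have comp: "\<And>a c u. (R ^^ a) s u \<Longrightarrow> (R ^^ c) u t \<Longrightarrow> (R ^^ (a + c)) s t"
    by (simp add: relpowp_add relcomppI)
  have noeq: "\<And>a b. a < b \<Longrightarrow> b \<le> n \<Longrightarrow> f a \<noteq> f b"
  proof
    fix a b assume ab: "a < b" "b \<le> n" "f a = f b"
    have "(R ^^ (n - b)) (f a) t" using suf[of b] ab by simp
    moreover have "(R ^^ a) s (f a)" using pre[of a] ab by simp
    ultimately have "(R ^^ (a + (n - b))) s t" using comp by blast
    then have "n \<le> a + (n - b)" by (rule nmin)
    then show False using ab by simp
  qed
  have noadj: "\<And>a b. a + 2 \<le> b \<Longrightarrow> b \<le> n \<Longrightarrow> \<not> E (f a) (f b)"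
  proof
    fix a b assume ab: "a + 2 \<le> b" "b \<le> n" "E (f a) (f b)"
    have "R (f a) (f b)" using ab fW[of a] fW[of b] unfolding R_def by simp
    then have "(R ^^ Suc a) s (f b)" using pre[of a] ab by (auto intro: relpowp_Suc_I)
    then have "(R ^^ (Suc a + (n - b))) s t" using comp suf[of b] ab by blast
    then have "n \<le> Suc a + (n - b)" by (rule nmin)
    then show False using ab by simp
  qed
  have "n \<noteq> 0" proof assume "n = 0" then show False using n st by simp qed
  moreover have "n \<noteq> 1" proof assume "n = 1" then show False using n st unfolding R_def by auto qed
  moreover have "\<not> n \<ge> 4"
  proof
    assume n4: "n \<ge> 4"
    have "inj_on f {0..<5}"
    proof (rule inj_onI)
      fix i j assume "i \<in> {0..<5::nat}" "j \<in> {0..<5::nat}" "f i = f j"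
      then have ij: "i \<le> n" "j \<le> n" "f i = f j" using n4 by auto
      show "i = j"
      proof (rule ccontr)
        assume "i \<noteq> j"
        then have "i < j \<or> j < i" by arith
        then show False using noeq[of i j] noeq[of j i] ij by auto
      qed
    qed
    moreover have "f ` {0..<5} \<subseteq> V" using fW W n4 by auto
    moreover have "\<forall>i<5. \<forall>j<5. E (f i) (f j) \<longleftrightarrow> (i + 1 = j \<or> j + 1 = i)"
    proof (intro allI impI)
      fix i j :: nat assume ij: "i < 5" "j < 5"
      show "E (f i) (f j) \<longleftrightarrow> (i + 1 = j \<or> j + 1 = i)"
      proof
        assume e: "E (f i) (f j)"
        show "i + 1 = j \<or> j + 1 = i"
        proof (rule ccontr)
          assume "\<not> (i + 1 = j \<or> j + 1 = i)"
          then have "i = j \<or> i + 2 \<le> j \<or> j + 2 \<le> i" by arith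
          moreover have "i \<le> n" "j \<le> n" using ij n4 by auto
          ultimately show False using e Eirr[of "f i"] Esym[of "f i" "f j"] noadj[of i j] noadj[of j i] by auto
        qed
      next
        assume "i + 1 = j \<or> j + 1 = i"
        then show "E (f i) (f j)"
        proof
          assume "i + 1 = j" then show ?thesis using fs[of i] ij n4 unfolding R_def by simp
        next
          assume "j + 1 = i" then show ?thesis using fs[of j] ij n4 Esym unfolding R_def by auto
        qed
      qed
    qed
    ultimately show False using P unfolding P5_free_def by blast
  qed
  ultimately have "n = 2 \<or> n = 3" by arith
  then show ?thesis
  proof
    assume n2: "n = 2"
    have "R (f 0) (f 1)" "R (f 1) (f 2)" using fs[of 0] fs[of 1] n2 by (simp_all add: numeral_2_eq_2)
    then show ?thesis using f0 fn n2 unfolding R_def by metis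
  next
    assume n3: "n = 3"
    have "R (f 0) (f 1)" "R (f 1) (f 2)" "R (f 2) (f 3)" using fs[of 0] fs[of 1] fs[of 2] n3 by (simp_all add: numeral_2_eq_2 numeral_3_eq_3)
    then show ?thesis using f0 fn n3 unfolding R_def by (metis numeral_3_eq_3)
  qed
qed


lemma lower_bound:
  assumes G: "simple_graph V E" and P: "P5_free V E"
    and s: "s \<in> V" and t: "t \<in> V" and st: "s \<noteq> t" "\<not> E s t"
    and dw: "divider_wins V E s t k"
  shows "lambda_G V E s t \<le> enat k"
proof -
  have Esym: "\<And>u v. E u v \<Longrightarrow> E v u" using G unfolding simple_graph_def by blast
  obtain D0 \<sigma> where len: "length D0 = k" and D0s: "set D0 \<subseteq> V - {s,t}" and
    win: "\<And>p N. p 0 = (s,t,D0) \<Longrightarrow> (\<forall>m. 2*m+1 \<le> N \<longrightarrow> fac_move V E (p (2*m)) (p (2*m+1))) \<Longrightarrow>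
       (\<forall>m. 2*m+2 \<le> N \<longrightarrow> p (2*m+2) = (fst (p (2*m+1)), fst (snd (p (2*m+1))), \<sigma> (map p [0..<2*m+2]))) \<Longrightarrow>
       (\<forall>m. 2*m+2 \<le> N \<longrightarrow> div_move V E (p (2*m+1)) (p (2*m+2))) \<and> (\<forall>i\<le>N. fst (p i) \<noteq> fst (snd (p i)))"
    using dw unfolding divider_wins_def by blast
  show ?thesis
  proof (cases "connected_in E (V - set D0) s t")
    case False
    then have "enat (card (set D0)) \<in> (\<lambda>S. enat (card S)) ` {S. S \<subseteq> V - {s, t} \<and> \<not> connected_in E (V - S) s t}"
      using D0s by auto
    then have "lambda_G V E s t \<le> enat (card (set D0))" using st unfolding lambda_G_def by (auto intro: Inf_lower)
    also have "\<dots> \<le> enat k" using card_length[of D0] len by auto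
    finally show ?thesis .
  next
    case True
    have "(\<exists>c\<in>V - set D0. E s c \<and> E c t) \<or> (\<exists>a\<in>V - set D0. \<exists>b\<in>V - set D0. E s a \<and> E a b \<and> E b t)"
      using short_path[OF G P _ True st] by blast
    then show ?thesis
    proof
      assume "\<exists>c\<in>V - set D0. E s c \<and> E c t"
      then obtain c where c: "c \<in> V" "c \<notin> set D0" "E s c" "E c t" by blast
      define p where "p = (\<lambda>i::nat. if i = 0 then (s,t,D0) else (c,c,D0))"
      have h1: "\<forall>m. 2*m+1 \<le> (1::nat) \<longrightarrow> fac_move V E (p (2*m)) (p (2*m+1))"
      proof (intro allI impI)
        fix m :: nat assume "2*m+1 \<le> 1"
        then have "m = 0" by arith
        then show "fac_move V E (p (2*m)) (p (2*m+1))"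
          using c Esym[of c t] unfolding p_def fac_move_def gstep_def by simp
      qed
      have p0: "p 0 = (s,t,D0)" by (simp add: p_def)
      have h3: "\<forall>m. 2*m+2 \<le> (1::nat) \<longrightarrow> p (2*m+2) = (fst (p (2*m+1)), fst (snd (p (2*m+1))), \<sigma> (map p [0..<2*m+2]))" by simp
      have "\<forall>i\<le>1. fst (p i) \<noteq> fst (snd (p i))" using win[OF p0 h1 h3] by blast
      then have "fst (p 1) \<noteq> fst (snd (p 1))" by blast
      then show ?thesis by (simp add: p_def)
    next
      assume "\<exists>a\<in>V - set D0. \<exists>b\<in>V - set D0. E s a \<and> E a b \<and> E b t"
      then obtain a b where ab: "a \<in> V" "a \<notin> set D0" "b \<in> V" "b \<notin> set D0" "E s a" "E a b" "E b t" by blast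
      define D' where "D' = \<sigma> [(s,t,D0),(a,b,D0)]"
      define p where "p = (\<lambda>i::nat. if i = 0 then (s,t,D0) else if i = 1 then (a,b,D0)
                          else if i = 2 then (a,b,D') else (b,b,D'))"
      have mp: "map p [0..<2] = [(s,t,D0),(a,b,D0)]" by (simp add: p_def upt_rec)
      have h2: "\<forall>m. 2*m+2 \<le> N \<longrightarrow> N \<le> 3 \<longrightarrow> p (2*m+2) = (fst (p (2*m+1)), fst (snd (p (2*m+1))), \<sigma> (map p [0..<2*m+2]))" for N :: nat
      proof (intro allI impI)
        fix m :: nat assume "2*m+2 \<le> N" "N \<le> 3"
        then have "m = 0" by arith
        then show "p (2*m+2) = (fst (p (2*m+1)), fst (snd (p (2*m+1))), \<sigma> (map p [0..<2*m+2]))"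
          using mp by (simp add: p_def D'_def)
      qed
      have f0: "fac_move V E (p 0) (p 1)" using ab Esym[of b t] unfolding p_def fac_move_def gstep_def by simp
      have "div_move V E (p 1) (p 2)"
      proof -
        have "\<forall>m. 2*m+1 \<le> (2::nat) \<longrightarrow> fac_move V E (p (2*m)) (p (2*m+1))"
        proof (intro allI impI)
          fix m :: nat assume "2*m+1 \<le> 2"
          then have "m = 0" by arith
          then show "fac_move V E (p (2*m)) (p (2*m+1))" using f0 by simp
        qed
        moreover have "p 0 = (s,t,D0)" by (simp add: p_def)
        moreover have "\<forall>m. 2*m+2 \<le> (2::nat) \<longrightarrow> p (2*m+2) = (fst (p (2*m+1)), fst (snd (p (2*m+1))), \<sigma> (map p [0..<2*m+2]))"
          using h2[of 2] by simp
        ultimately have "\<forall>m. 2*m+2 \<le> (2::nat) \<longrightarrow> div_move V E (p (2*m+1)) (p (2*m+2))" using win by blast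
        then show ?thesis by (metis mult_0_right add_0 le_refl one_add_one)
      qed
      then have lD': "length D' = length D0" and bD': "\<forall>i<length D0. D' ! i \<noteq> b"
        unfolding div_move_def p_def by auto
      have bnot: "b \<notin> set D'"
      proof
        assume "b \<in> set D'"
        then obtain i where "i < length D'" "D' ! i = b" by (auto simp: in_set_conv_nth)
        then show False using lD' bD' by auto
      qed
      have f1: "fac_move V E (p 2) (p 3)" using ab bnot unfolding p_def fac_move_def gstep_def by simp
      have "\<forall>m. 2*m+1 \<le> (3::nat) \<longrightarrow> fac_move V E (p (2*m)) (p (2*m+1))"
      proof (intro allI impI)
        fix m :: nat assume "2*m+1 \<le> 3"
        then have "m = 0 \<or> m = 1" by arith
        then show "fac_move V E (p (2*m)) (p (2*m+1))" using f0 f1 by auto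
      qed
      moreover have "p 0 = (s,t,D0)" by (simp add: p_def)
      moreover have "\<forall>m. 2*m+2 \<le> (3::nat) \<longrightarrow> p (2*m+2) = (fst (p (2*m+1)), fst (snd (p (2*m+1))), \<sigma> (map p [0..<2*m+2]))"
        using h2[of 3] by simp
      ultimately have "\<forall>i\<le>3. fst (p i) \<noteq> fst (snd (p i))" using win by blast
      then have "fst (p 3) \<noteq> fst (snd (p 3))" by blast
      then show ?thesis by (simp add: p_def)
    qed
  qed
qed

lemma upper_bound:
  assumes G: "simple_graph V E" and C: "connected_graph V E"
    and s: "s \<in> V" and t: "t \<in> V" and st: "s \<noteq> t" "\<not> E s t"
  shows "d_G V E s t \<le> lambda_G V E s t"
proof (cases "{S. S \<subseteq> V - {s, t} \<and> \<not> connected_in E (V - S) s t} = {}")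
  case True
  then show ?thesis unfolding lambda_G_def True using st by simp
next
  case False
  define A where "A = (\<lambda>S. enat (card S)) ` {S. S \<subseteq> V - {s, t} \<and> \<not> connected_in E (V - S) s t}"
  have "A \<noteq> {}" using False unfolding A_def by blast
  then have "Inf A \<in> A" unfolding Inf_enat_def by (auto intro: LeastI)
  then obtain S where S: "S \<subseteq> V - {s,t}" "\<not> connected_in E (V - S) s t" and lam: "lambda_G V E s t = enat (card S)"
    using st unfolding A_def lambda_G_def by auto
  have finV: "finite V" using G unfolding simple_graph_def by blast
  then have finS: "finite S" using S finite_subset by blast
  have "S \<noteq> {}" using S C s t unfolding connected_graph_def by auto
  then have cS: "card S \<ge> 1" using finS by (simp add: Suc_le_eq card_gt_0_iff)
  obtain D0 where D0: "set D0 = S" "distinct D0" using finite_distinct_list[OF finS] by blast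
  have lenD0: "length D0 = card S" using D0 distinct_card by fastforce
  have "divider_wins V E s t (card S)"
    unfolding divider_wins_def
  proof (rule exI[of _ D0], rule exI[of _ "\<lambda>_. D0"], rule conjI, rule lenD0, rule conjI, use D0 S in simp, intro allI impI)
    fix p :: "nat \<Rightarrow> 'a pos" and N :: nat
    assume p0: "p 0 = (s, t, D0)"
      and hf: "\<forall>m. 2 * m + 1 \<le> N \<longrightarrow> fac_move V E (p (2 * m)) (p (2 * m + 1))"
      and hd: "\<forall>m. 2 * m + 2 \<le> N \<longrightarrow> p (2 * m + 2) = (fst (p (2 * m + 1)), fst (snd (p (2 * m + 1))), D0)"
    have inv: "i \<le> N \<Longrightarrow> snd (snd (p i)) = D0 \<and> connected_in E (V - S) s (fst (p i)) \<and> connected_in E (V - S) t (fst (snd (p i)))" for i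
    proof (induction i)
      case 0
      have "s \<in> V - S" "t \<in> V - S" using s t S by auto
      then show ?case using p0 unfolding connected_in_def by simp
    next
      case (Suc i)
      then have IH: "snd (snd (p i)) = D0" "connected_in E (V - S) s (fst (p i))" "connected_in E (V - S) t (fst (snd (p i)))"
        by auto
      show ?case
      proof (cases "even i")
        case True
        then obtain m where m: "i = 2 * m" by blast
        have fm: "fac_move V E (p i) (p (Suc i))" using hf Suc.prems m by auto
        obtain r j D where pi: "p i = (r, j, D)" by (cases "p i") auto
        obtain r' j' D' where pi': "p (Suc i) = (r', j', D')" by (cases "p (Suc i)") auto
        have mv: "D' = D" "gstep V E r r'" "gstep V E j j'" "r' \<notin> set D" "j' \<notin> set D"
          using fm unfolding fac_move_def pi pi' by auto
        have "r' \<in> V - S" "j' \<in> V - S" using mv IH D0 pi unfolding gstep_def by auto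
        then show ?thesis using IH mv pi pi' connected_in_step[of E "V - S" s r V r'] connected_in_step[of E "V - S" t j V j'] by auto
      next
        case False
        then obtain m where m: "i = 2 * m + 1" using oddE by blast
        have "p (Suc i) = (fst (p i), fst (snd (p i)), D0)" using hd Suc.prems m by auto
        then show ?thesis using IH by simp
      qed
    qed
    have A: "\<forall>m. 2 * m + 2 \<le> N \<longrightarrow> div_move V E (p (2 * m + 1)) (p (2 * m + 2))"
    proof (intro allI impI)
      fix m assume m: "2 * m + 2 \<le> N"
      obtain r j D where pi: "p (2*m+1) = (r, j, D)" by (cases "p (2*m+1)") auto
      have I: "D = D0" "connected_in E (V - S) s r" "connected_in E (V - S) t j" using inv[of "2*m+1"] m pi by auto
      have p2: "p (2*m+2) = (r, j, D0)" using hd m pi by auto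
      have "r \<notin> S" "j \<notin> S" using I unfolding connected_in_def by auto
      moreover have "\<And>i. i < length D0 \<Longrightarrow> D0 ! i \<in> S" using D0 by auto
      ultimately show "div_move V E (p (2 * m + 1)) (p (2 * m + 2))"
        unfolding pi p2 div_move_def gstep_def using I S by auto
    qed
    have B: "\<forall>i\<le>N. fst (p i) \<noteq> fst (snd (p i))"
    proof (intro allI impI)
      fix i assume "i \<le> N"
      then have I: "connected_in E (V - S) s (fst (p i))" "connected_in E (V - S) t (fst (snd (p i)))" using inv by auto
      show "fst (p i) \<noteq> fst (snd (p i))"
      proof
        assume "fst (p i) = fst (snd (p i))"
        then have "connected_in E (V - S) s t" using I connected_in_trans connected_in_sym[OF G] by metis
        then show False using S by simp
      qed
    qed
    show "(\<forall>m. 2 * m + 2 \<le> N \<longrightarrow> div_move V E (p (2 * m + 1)) (p (2 * m + 2))) \<and> (\<forall>i\<le>N. fst (p i) \<noteq> fst (snd (p i)))"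
      using A B by blast
  qed
  then have "enat (card S) \<in> enat ` {k. k \<ge> 1 \<and> divider_wins V E s t k}" using cS by auto
  then have "d_G V E s t \<le> enat (card S)" using st unfolding d_G_def by (auto intro: Inf_lower)
  then show ?thesis using lam by simp
qed

theorem mainTheorem7:
  fixes V :: "'a set" and E :: "'a \<Rightarrow> 'a \<Rightarrow> bool"
  assumes "simple_graph V E" and "connected_graph V E" and "P5_free V E"
  shows "\<forall>s\<in>V. \<forall>t\<in>V. d_G V E s t = lambda_G V E s t"
proof (intro ballI)
  fix s t assume s: "s \<in> V" and t: "t \<in> V"
  show "d_G V E s t = lambda_G V E s t"
  proof (cases "s = t \<or> E s t")
    case True then show ?thesis unfolding d_G_def lambda_G_def by simp
  next
    case False
    then have st: "s \<noteq> t" "\<not> E s t" by auto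
    have "lambda_G V E s t \<le> d_G V E s t"
      unfolding d_G_def using False lower_bound[OF assms(1) assms(3) s t st]
      by (auto intro!: Inf_greatest)
    moreover have "d_G V E s t \<le> lambda_G V E s t" by (rule upper_bound[OF assms(1) assms(2) s t st])
    ultimately show ?thesis by simp
  qed
qed

end
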